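(* Let $N\ge4$, $M\ge1$, $\mathcal I_N=\{(i,j):i,j\in\{1,\dots,N\},i\ne j\}$, and for each $(i,j)\in\mathcal I_N$ let $Y_{ij}\in\{0,\dots,M\}$ and $X_{ij}\in\mathbb R^k$. Suppose that, conditional on $\mathbf X=(X_{ij})$ and fixed effects $\mathbf F=(F_i)_{i=1}^N$ with $F_i=((\gamma_i,\lambda_{im}):m=1,\dots,M)$, the $Y_{ij}$ are independent across dyads with \[ P(Y_{ij}=m\mid X_{ij},F_i,F_j)=\begin{cases}1-\Lambda(X_{ij}'\beta_0+\gamma_j-\lambda_{i1}), & m=0,\\ \Lambda(X_{ij}'\beta_0+\gamma_j-\lambda_{im})-\Lambda(X_{ij}'\beta_0+\gamma_j-\lambda_{i,m+1}), & 1\le m\le M-1,\\ \Lambda(X_{ij}'\beta_0+\gamma_j-\lambda_{iM}), & m=M,\end{cases} \] where $\Lambda(z)=e^z/(1+e^z)$, $\beta_0\in\mathbb R^k$, and $\lambda_{i1}\le\dots\le\lambda_{iM}$ for each $i$. Let $D_{ij}(m)=\mathbf 1\{Y_{ij}\ge m\}$. For a tetrad $\sigma=(i_1,i_2,j_1,j_2)$ of four distinct nodes and $(m,m')\in\{1,\dots,M\}^2$ define \[ Z_\sigma(m;m')=\tfrac12\Big((D_{i_1j_1}(m)-D_{i_1j_2}(m))-(D_{i_2j_1}(m')-D_{i_2j_2}(m'))\Big), \] $X_\sigma=(X_{i_1j_1},X_{i_1j_2},X_{i_2j_1},X_{i_2j_2})$ and $r_\sigma=(X_{i_1j_1}-X_{i_1j_2})-(X_{i_2j_1}-X_{i_2j_2})$.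 Then for any $(m,m')\in\{1,\dots,M\}^2$, \[ P\big(Z_\sigma(m;m')=1\mid Z_\sigma(m;m')\in\{-1,+1\},X_\sigma\big)=\Lambda(r_\sigma'\beta_0). \]
   Context: $\lambda_{im}$ are category-specific sender threshold effects and $\gamma_j$ is a receiver fixed effect constant across categories. *)

theory Defs
  imports "HOL-Probability.Probability"
begin

definition Lambda :: "real \<Rightarrow> real" where
  "Lambda z = exp z / (1 + exp z)"

text \<open>Ordered-logit category probabilities, with index a = X_ij'beta0 + gamma_j
  and thresholds lam m = lambda_{im} (m = 1..M).\<close>
definition ologit_prob :: "nat \<Rightarrow> real \<Rightarrow> (nat \<Rightarrow> real) \<Rightarrow> nat \<Rightarrow> real" where
  "ologit_prob M a lam m =
     (if m = 0 then 1 - Lambda (a - lam 1)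
      else if m < M then Lambda (a - lam m) - Lambda (a - lam (Suc m))
      else Lambda (a - lam M))"

definition dyads :: "nat \<Rightarrow> (nat \<times> nat) set" where
  "dyads N = {(i, j). i \<in> {1..N} \<and> j \<in> {1..N} \<and> i \<noteq> j}"

definition Dind :: "nat \<Rightarrow> nat \<Rightarrow> real" where
  "Dind y m = (if m \<le> y then 1 else 0)"

definition Ztet :: "(nat \<Rightarrow> nat \<Rightarrow> nat) \<Rightarrow> nat \<Rightarrow> nat \<Rightarrow> nat \<Rightarrow> nat \<Rightarrow> nat \<Rightarrow> nat \<Rightarrow> real" where
  "Ztet y i1 i2 j1 j2 m m' =
     (1/2) * ((Dind (y i1 j1) m - Dind (y i1 j2) m) - (Dind (y i2 j1) m' - Dind (y i2 j2) m'))"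

end

theory Submission
  imports Defs
begin

lemma tele:
  assumes "1 \<le> k" "k \<le> Mc"
  shows "(\<Sum>y\<in>{k..Mc}. ologit_prob Mc a l y) = Lambda (a - l k)"
  using assms
proof (induction "Mc - k" arbitrary: k)
  case 0
  then have "k = Mc" by simp
  then show ?case using 0 by (simp add: ologit_prob_def)
next
  case (Suc n)
  then have h: "(\<Sum>y\<in>{Suc k..Mc}. ologit_prob Mc a l y) = Lambda (a - l (Suc k))" by simp
  have "(\<Sum>y\<in>{k..Mc}. ologit_prob Mc a l y) = ologit_prob Mc a l k + (\<Sum>y\<in>{Suc k..Mc}. ologit_prob Mc a l y)"
    using Suc by (simp add: sum.atLeast_Suc_atMost)
  then show ?case using h Suc by (simp add: ologit_prob_def)
qed

lemma indep4:
  assumes "prob_space M" "prob_space.indep_vars M (\<lambda>_. count_space UNIV) Yd I"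
    "d1 \<in> I" "d2 \<in> I" "d3 \<in> I" "d4 \<in> I" "distinct [d1,d2,d3,d4]"
  shows "measure M {\<omega>\<in>space M. Yd d1 \<omega> \<in> S1 \<and> Yd d2 \<omega> \<in> S2 \<and> Yd d3 \<omega> \<in> S3 \<and> Yd d4 \<omega> \<in> S4}
    = measure M {\<omega>\<in>space M. Yd d1 \<omega> \<in> S1} * measure M {\<omega>\<in>space M. Yd d2 \<omega> \<in> S2}
      * measure M {\<omega>\<in>space M. Yd d3 \<omega> \<in> S3} * measure M {\<omega>\<in>space M. Yd d4 \<omega> \<in> S4}"
proof -
  interpret prob_space M by fact
  define A where "A d = (if d = d1 then S1 else if d = d2 then S2 else if d = d3 then S3 else S4)" for d
  have "prob (\<Inter>i\<in>{d1,d2,d3,d4}. Yd i -` A i \<inter> space M) = (\<Prod>i\<in>{d1,d2,d3,d4}. prob (Yd i -` A i \<inter> space M))"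
    by (rule indep_varsD[OF assms(2)]) (use assms in auto)
  moreover have "(\<Inter>i\<in>{d1,d2,d3,d4}. Yd i -` A i \<inter> space M) = {\<omega>\<in>space M. Yd d1 \<omega> \<in> S1 \<and> Yd d2 \<omega> \<in> S2 \<and> Yd d3 \<omega> \<in> S3 \<and> Yd d4 \<omega> \<in> S4}"
    using assms(7) by (auto simp: A_def)
  moreover have "\<And>d S. Yd d -` S \<inter> space M = {\<omega>\<in>space M. Yd d \<omega> \<in> S}" by auto
  moreover have "(\<Prod>i\<in>{d1,d2,d3,d4}. prob (Yd i -` A i \<inter> space M)) =
     prob (Yd d1 -` A d1 \<inter> space M) * prob (Yd d2 -` A d2 \<inter> space M) * prob (Yd d3 -` A d3 \<inter> space M) * prob (Yd d4 -` A d4 \<inter> space M)"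
    using assms(7) by (simp add: mult.assoc)
  moreover have "A d1 = S1" "A d2 = S2" "A d3 = S3" "A d4 = S4" using assms(7) by (auto simp: A_def)
  ultimately show ?thesis by metis
qed

lemma alg0:
  fixes a b c d :: real
  assumes "a > 0" "b > 0" "c > 0" "d > 0"
  defines "Q \<equiv> (1+a)*(1+b)*(1+c)*(1+d)"
  shows "a/(1+a) * (1/(1+b)) * (1/(1+c)) * (d/(1+d)) = a*d/Q"
    and "1/(1+a) * (b/(1+b)) * (c/(1+c)) * (1/(1+d)) = b*c/Q"
  unfolding Q_def by simp_all

lemma alg1:
  fixes a b c d Q :: real
  assumes "a > 0" "b > 0" "c > 0" "d > 0" "Q > 0"
  shows "(a*d/Q) / (a*d/Q + b*c/Q) = (a*d/(b*c)) / (1 + a*d/(b*c))"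
proof -
  have "(a*d/Q) / (a*d/Q + b*c/Q) = (a*d)/(a*d+b*c)"
    using assms by (simp add: add_divide_distrib[symmetric])
  also have "... = (a*d/(b*c)) / (1 + a*d/(b*c))"
    using assms by (simp add: field_simps)
  finally show ?thesis .
qed

lemma alg:
  fixes z11 z12 z21 z22 :: real
  defines "P1 \<equiv> Lambda z11 * (1 - Lambda z12) * (1 - Lambda z21) * Lambda z22"
    and "P2 \<equiv> (1 - Lambda z11) * Lambda z12 * Lambda z21 * (1 - Lambda z22)"
  shows "P1 + P2 > 0 \<and> P1 / (P1 + P2) = Lambda (z11 - z12 - z21 + z22)"
proof -
  have p: "\<And>z::real. 0 < 1 + exp z" using add_pos_pos[OF zero_less_one exp_gt_zero] by simp
  have c: "\<And>z. 1 - Lambda z = 1 / (1 + exp z)" unfolding Lambda_def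
  proof -
    fix z :: real
    have "1 - exp z / (1 + exp z) = ((1 + exp z) - exp z) / (1 + exp z)"
      using p[of z] by (simp add: field_simps)
    then show "1 - exp z / (1 + exp z) = 1 / (1 + exp z)" by simp
  qed
  have e: "exp (z11 - z12 - z21 + z22) = exp z11 * exp z22 / (exp z12 * exp z21)"
    by (simp add: exp_add exp_diff)
  define Q where "Q = (1+exp z11)*(1+exp z12)*(1+exp z21)*(1+exp z22)"
  have Q: "Q > 0" unfolding Q_def using p by simp
  have 1: "P1 = exp z11 * exp z22 / Q" unfolding P1_def c unfolding Lambda_def Q_def
    by (rule alg0(1)) simp_all
  have 2: "P2 = exp z12 * exp z21 / Q" unfolding P2_def c unfolding Lambda_def Q_def
    by (rule alg0(2)) simp_all
  have pos: "P1 + P2 > 0" unfolding 1 2 using Q by (simp add: add_pos_pos)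
  have "P1 / (P1 + P2) = (exp z11 * exp z22/(exp z12 * exp z21)) / (1 + exp z11 * exp z22/(exp z12 * exp z21))"
    unfolding 1 2 by (rule alg1) (simp_all add: Q)
  then show ?thesis using pos unfolding Lambda_def e by simp
qed

lemma Zone: "Ztet y i1 i2 j1 j2 m m' = 1 \<longleftrightarrow> (m \<le> y i1 j1 \<and> y i1 j2 < m \<and> y i2 j1 < m' \<and> m' \<le> y i2 j2)"
  unfolding Ztet_def Dind_def by (simp split: if_split)
lemma Zpm: "Ztet y i1 i2 j1 j2 m m' \<in> {-1,1} \<longleftrightarrow> (m \<le> y i1 j1 \<and> y i1 j2 < m \<and> y i2 j1 < m' \<and> m' \<le> y i2 j2)
   \<or> (y i1 j1 < m \<and> m \<le> y i1 j2 \<and> m' \<le> y i2 j1 \<and> y i2 j2 < m')"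
  unfolding Ztet_def Dind_def by (simp split: if_split)

lemma evt:
  assumes "Y \<in> measurable M (count_space UNIV)"
  shows "{\<omega>\<in>space M. P (Y \<omega>)} \<in> sets M"
proof -
  have "{\<omega>\<in>space M. P (Y \<omega>)} = Y -` {x. P x} \<inter> space M" by auto
  then show ?thesis using measurable_sets[OF assms, of "{x. P x}"] by simp
qed

theorem theorem4:
  fixes M :: "'a measure"
    and N Mc :: nat
    and Y :: "nat \<Rightarrow> nat \<Rightarrow> 'a \<Rightarrow> nat"
    and X :: "nat \<Rightarrow> nat \<Rightarrow> real ^ 'k"
    and beta0 :: "real ^ 'k"
    and gamma :: "nat \<Rightarrow> real"
    and lam :: "nat \<Rightarrow> nat \<Rightarrow> real"
    and i1 i2 j1 j2 m m' :: nat
  assumes "prob_space M"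
    and "N \<ge> 4" and "Mc \<ge> 1"
    and meas: "\<And>i j. (i, j) \<in> dyads N \<Longrightarrow> Y i j \<in> measurable M (count_space UNIV)"
    and range: "\<And>i j \<omega>. (i, j) \<in> dyads N \<Longrightarrow> \<omega> \<in> space M \<Longrightarrow> Y i j \<omega> \<le> Mc"
    and indep: "prob_space.indep_vars M (\<lambda>_. count_space UNIV) (\<lambda>(i, j). Y i j) (dyads N)"
    and model: "\<And>i j y. (i, j) \<in> dyads N \<Longrightarrow> y \<le> Mc \<Longrightarrow>
        measure M {\<omega> \<in> space M. Y i j \<omega> = y}
          = ologit_prob Mc (X i j \<bullet> beta0 + gamma j) (lam i) y"
    and mono: "\<And>i a b. i \<in> {1..N} \<Longrightarrow> 1 \<le> a \<Longrightarrow> a \<le> b \<Longrightarrow> b \<le> Mc \<Longrightarrow> lam i a \<le> lam i b"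
    and nodes: "i1 \<in> {1..N}" "i2 \<in> {1..N}" "j1 \<in> {1..N}" "j2 \<in> {1..N}"
    and dist: "distinct [i1, i2, j1, j2]"
    and mm: "m \<in> {1..Mc}" "m' \<in> {1..Mc}"
  shows "measure M {\<omega> \<in> space M. Ztet (\<lambda>i j. Y i j \<omega>) i1 i2 j1 j2 m m' \<in> {-1, 1}} > 0 \<and>
         measure M {\<omega> \<in> space M. Ztet (\<lambda>i j. Y i j \<omega>) i1 i2 j1 j2 m m' = 1}
           / measure M {\<omega> \<in> space M. Ztet (\<lambda>i j. Y i j \<omega>) i1 i2 j1 j2 m m' \<in> {-1, 1}}
         = Lambda (((X i1 j1 - X i1 j2) - (X i2 j1 - X i2 j2)) \<bullet> beta0)"
proof -
  interpret P: prob_space M by fact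
  define a where "a i j = X i j \<bullet> beta0 + gamma j" for i j
  have dy: "(i1,j1) \<in> dyads N" "(i1,j2) \<in> dyads N" "(i2,j1) \<in> dyads N" "(i2,j2) \<in> dyads N"
    using nodes dist by (auto simp: dyads_def)
  have tail: "measure M {\<omega>\<in>space M. k \<le> Y i j \<omega>} = Lambda (a i j - lam i k)"
    if ij: "(i,j) \<in> dyads N" and k: "1 \<le> k" "k \<le> Mc" for i j k
  proof -
    have "{\<omega>\<in>space M. k \<le> Y i j \<omega>} = (\<Union>y\<in>{k..Mc}. {\<omega>\<in>space M. Y i j \<omega> = y})"
      using range[OF ij] by auto
    then have "measure M {\<omega>\<in>space M. k \<le> Y i j \<omega>} = (\<Sum>y\<in>{k..Mc}. measure M {\<omega>\<in>space M. Y i j \<omega> = y})"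
      using evt[OF meas[OF ij]]
      by (simp only:, intro measure_finite_Union) (auto simp: disjoint_family_on_def P.emeasure_finite)
    also have "... = (\<Sum>y\<in>{k..Mc}. ologit_prob Mc (a i j) (lam i) y)"
      using model[OF ij] by (simp add: a_def)
    also have "... = Lambda (a i j - lam i k)" by (rule tele[OF k])
    finally show ?thesis .
  qed
  have comp: "measure M {\<omega>\<in>space M. Y i j \<omega> < k} = 1 - Lambda (a i j - lam i k)"
    if ij: "(i,j) \<in> dyads N" and k: "1 \<le> k" "k \<le> Mc" for i j k
  proof -
    have "{\<omega>\<in>space M. Y i j \<omega> < k} = space M - {\<omega>\<in>space M. k \<le> Y i j \<omega>}" by auto
    then show ?thesis using P.prob_compl[OF evt[OF meas[OF ij]]] tail[OF ij k] by simp
  qed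
  have dd: "distinct [(i1,j1),(i1,j2),(i2,j1),(i2,j2)]" using dist by auto
  have i1: "measure M {\<omega>\<in>space M. m \<le> Y i1 j1 \<omega> \<and> Y i1 j2 \<omega> < m \<and> Y i2 j1 \<omega> < m' \<and> m' \<le> Y i2 j2 \<omega>}
     = measure M {\<omega>\<in>space M. m \<le> Y i1 j1 \<omega>} * measure M {\<omega>\<in>space M. Y i1 j2 \<omega> < m}
       * measure M {\<omega>\<in>space M. Y i2 j1 \<omega> < m'} * measure M {\<omega>\<in>space M. m' \<le> Y i2 j2 \<omega>}"
    using indep4[OF assms(1) indep dy dd, of "{m..}" "{..<m}" "{..<m'}" "{m'..}"] by simp
  have i2: "measure M {\<omega>\<in>space M. Y i1 j1 \<omega> < m \<and> m \<le> Y i1 j2 \<omega> \<and> m' \<le> Y i2 j1 \<omega> \<and> Y i2 j2 \<omega> < m'}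
     = measure M {\<omega>\<in>space M. Y i1 j1 \<omega> < m} * measure M {\<omega>\<in>space M. m \<le> Y i1 j2 \<omega>}
       * measure M {\<omega>\<in>space M. m' \<le> Y i2 j1 \<omega>} * measure M {\<omega>\<in>space M. Y i2 j2 \<omega> < m'}"
    using indep4[OF assms(1) indep dy dd, of "{..<m}" "{m..}" "{m'..}" "{..<m'}"] by simp
  define E1 where "E1 = {\<omega>\<in>space M. m \<le> Y i1 j1 \<omega> \<and> Y i1 j2 \<omega> < m \<and> Y i2 j1 \<omega> < m' \<and> m' \<le> Y i2 j2 \<omega>}"
  define E2 where "E2 = {\<omega>\<in>space M. Y i1 j1 \<omega> < m \<and> m \<le> Y i1 j2 \<omega> \<and> m' \<le> Y i2 j1 \<omega> \<and> Y i2 j2 \<omega> < m'}"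
  have Z1: "{\<omega> \<in> space M. Ztet (\<lambda>i j. Y i j \<omega>) i1 i2 j1 j2 m m' = 1} = E1"
    unfolding E1_def Zone by simp
  have Z2: "{\<omega> \<in> space M. Ztet (\<lambda>i j. Y i j \<omega>) i1 i2 j1 j2 m m' \<in> {-1, 1}} = E1 \<union> E2"
    unfolding E1_def E2_def Zpm by auto
  have E1s: "E1 \<in> sets M" unfolding E1_def
    by (intro sets.sets_Collect_conj evt[OF meas[OF dy(1)], of "(\<lambda>y. m \<le> y)"] evt[OF meas[OF dy(2)], of "(\<lambda>y. y < m)"] evt[OF meas[OF dy(3)], of "(\<lambda>y. y < m')"] evt[OF meas[OF dy(4)], of "(\<lambda>y. m' \<le> y)"])
  have E2s: "E2 \<in> sets M" unfolding E2_def
    by (intro sets.sets_Collect_conj evt[OF meas[OF dy(1)], of "(\<lambda>y. y < m)"] evt[OF meas[OF dy(2)], of "(\<lambda>y. m \<le> y)"] evt[OF meas[OF dy(3)], of "(\<lambda>y. m' \<le> y)"] evt[OF meas[OF dy(4)], of "(\<lambda>y. y < m')"])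
  have U: "measure M (E1 \<union> E2) = measure M E1 + measure M E2"
    by (rule P.finite_measure_Union[OF E1s E2s]) (auto simp: E1_def E2_def)
  have mm1: "1 \<le> m" "m \<le> Mc" "1 \<le> m'" "m' \<le> Mc" using mm by auto
  have p1: "measure M E1 = Lambda (a i1 j1 - lam i1 m) * (1 - Lambda (a i1 j2 - lam i1 m))
      * (1 - Lambda (a i2 j1 - lam i2 m')) * Lambda (a i2 j2 - lam i2 m')"
    unfolding E1_def i1 using tail[OF dy(1) mm1(1,2)] comp[OF dy(2) mm1(1,2)]
      comp[OF dy(3) mm1(3,4)] tail[OF dy(4) mm1(3,4)] by simp
  have p2: "measure M E2 = (1 - Lambda (a i1 j1 - lam i1 m)) * Lambda (a i1 j2 - lam i1 m)
      * Lambda (a i2 j1 - lam i2 m') * (1 - Lambda (a i2 j2 - lam i2 m'))"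
    unfolding E2_def i2 using comp[OF dy(1) mm1(1,2)] tail[OF dy(2) mm1(1,2)]
      tail[OF dy(3) mm1(3,4)] comp[OF dy(4) mm1(3,4)] by simp
  have zz: "(a i1 j1 - lam i1 m) - (a i1 j2 - lam i1 m) - (a i2 j1 - lam i2 m') + (a i2 j2 - lam i2 m')
     = ((X i1 j1 - X i1 j2) - (X i2 j1 - X i2 j2)) \<bullet> beta0"
    unfolding a_def by (simp add: inner_diff_left algebra_simps)
  show ?thesis
    unfolding Z1 Z2 U p1 p2 using alg[of "a i1 j1 - lam i1 m" "a i1 j2 - lam i1 m" "a i2 j1 - lam i2 m'" "a i2 j2 - lam i2 m'"]
    unfolding zz by blast
qed

end
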